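(* Let a group $G$ act freely and cospecially by combinatorial isometries on a CAT(0) cube complex $X$. Let $A_1,A_2$ be parallel convex subcomplexes of $X$. Assume that for every $g\in G$ and $i\in\{1,2\}$, either $gA_i = A_i$ or $gA_i\cap A_i=\emptyset$. Then $\mathrm{Stab}(A_1) = \mathrm{Stab}(A_2)$.
   Context: Two convex subcomplexes are parallel if the sets of hyperplanes dual to their edges coincide. An action is cospecial if the quotient $X/G$ is a special cube complex in the sense of Haglund–Wise. $\mathrm{Stab}(A)$ is the setwise stabilizer of $A$ in $G$. *)

theory Defs
  imports Main "HOL-Algebra.Group_Action"
begin

text \<open>A CAT(0) cube complex X is modelled by its 1-skeleton (vertex set V, adjacency adj),
which is a median graph (Chepoi / Roller / Gerasimov); cubes of X are exactly the
vertex sets of induced hypercube subgraphs, hyperplanes are the Djokovic-Winkler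
classes of edges, combinatorial isometries are graph automorphisms.\<close>

definition walk :: "'v set \<Rightarrow> ('v \<Rightarrow> 'v \<Rightarrow> bool) \<Rightarrow> 'v list \<Rightarrow> bool" where
  "walk V adj xs \<longleftrightarrow> xs \<noteq> [] \<and> set xs \<subseteq> V \<and>
     (\<forall>i. Suc i < length xs \<longrightarrow> adj (xs ! i) (xs ! Suc i))"

definition gdist :: "'v set \<Rightarrow> ('v \<Rightarrow> 'v \<Rightarrow> bool) \<Rightarrow> 'v \<Rightarrow> 'v \<Rightarrow> nat" where
  "gdist V adj u v = (LEAST n. \<exists>xs. walk V adj xs \<and> hd xs = u \<and> last xs = v \<and> length xs = Suc n)"

definition ginterval :: "'v set \<Rightarrow> ('v \<Rightarrow> 'v \<Rightarrow> bool) \<Rightarrow> 'v \<Rightarrow> 'v \<Rightarrow> 'v set" where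
  "ginterval V adj u v = {x \<in> V. gdist V adj u x + gdist V adj x v = gdist V adj u v}"

definition median_graph :: "'v set \<Rightarrow> ('v \<Rightarrow> 'v \<Rightarrow> bool) \<Rightarrow> bool" where
  "median_graph V adj \<longleftrightarrow>
     (\<forall>a b. adj a b \<longrightarrow> a \<in> V \<and> b \<in> V) \<and>
     (\<forall>a b. adj a b \<longrightarrow> adj b a) \<and> (\<forall>a. \<not> adj a a) \<and>
     (\<forall>u\<in>V. \<forall>v\<in>V. \<exists>xs. walk V adj xs \<and> hd xs = u \<and> last xs = v) \<and>
     (\<forall>u\<in>V. \<forall>v\<in>V. \<forall>w\<in>V. \<exists>!m. m \<in> ginterval V adj u v \<and> m \<in> ginterval V adj v w
                                    \<and> m \<in> ginterval V adj u w)"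

abbreviation cat0_cube_complex :: "'v set \<Rightarrow> ('v \<Rightarrow> 'v \<Rightarrow> bool) \<Rightarrow> bool" where
  "cat0_cube_complex \<equiv> median_graph"

definition is_cube :: "'v set \<Rightarrow> ('v \<Rightarrow> 'v \<Rightarrow> bool) \<Rightarrow> 'v set \<Rightarrow> bool" where
  "is_cube V adj C \<longleftrightarrow> C \<subseteq> V \<and> (\<exists>(n::nat) f. bij_betw f (Pow {..<n}) C \<and>
     (\<forall>S\<in>Pow {..<n}. \<forall>T\<in>Pow {..<n}. adj (f S) (f T) \<longleftrightarrow> card ((S - T) \<union> (T - S)) = 1))"

definition convex_subcomplex :: "'v set \<Rightarrow> ('v \<Rightarrow> 'v \<Rightarrow> bool) \<Rightarrow> 'v set \<Rightarrow> bool" where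
  "convex_subcomplex V adj A \<longleftrightarrow> A \<noteq> {} \<and> A \<subseteq> V \<and>
     (\<forall>u\<in>A. \<forall>v\<in>A. ginterval V adj u v \<subseteq> A)"

text \<open>Hyperplane dual to the edge {a,b}: its Djokovic-Winkler class (set of undirected edges).\<close>
definition hyp :: "'v set \<Rightarrow> ('v \<Rightarrow> 'v \<Rightarrow> bool) \<Rightarrow> 'v \<Rightarrow> 'v \<Rightarrow> 'v set set" where
  "hyp V adj a b = {{c, d} | c d. c \<in> V \<and> d \<in> V \<and> adj c d \<and>
      gdist V adj a c + gdist V adj b d \<noteq> gdist V adj a d + gdist V adj b c}"

definition hyperplanes :: "'v set \<Rightarrow> ('v \<Rightarrow> 'v \<Rightarrow> bool) \<Rightarrow> 'v set set set" where
  "hyperplanes V adj = {hyp V adj a b | a b. a \<in> V \<and> b \<in> V \<and> adj a b}"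

definition halfspace :: "'v set \<Rightarrow> ('v \<Rightarrow> 'v \<Rightarrow> bool) \<Rightarrow> 'v \<Rightarrow> 'v \<Rightarrow> 'v set" where
  "halfspace V adj a b = {x \<in> V. gdist V adj x a < gdist V adj x b}"

definition crosses :: "'v set \<Rightarrow> ('v \<Rightarrow> 'v \<Rightarrow> bool) \<Rightarrow> 'v set set \<Rightarrow> 'v set set \<Rightarrow> bool" where
  "crosses V adj H K \<longleftrightarrow> (\<exists>a\<in>V. \<exists>b\<in>V. \<exists>c\<in>V. \<exists>d\<in>V.
      adj a b \<and> adj b c \<and> adj c d \<and> adj d a \<and> a \<noteq> c \<and> b \<noteq> d \<and> {a, b} \<in> H \<and> {b, c} \<in> K)"

definition spans_square :: "'v set \<Rightarrow> ('v \<Rightarrow> 'v \<Rightarrow> bool) \<Rightarrow> 'v \<Rightarrow> 'v \<Rightarrow> 'v \<Rightarrow> bool" where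
  "spans_square V adj v w1 w2 \<longleftrightarrow> (\<exists>u\<in>V. u \<noteq> v \<and> adj w1 u \<and> adj w2 u)"

definition translate :: "('v \<Rightarrow> 'v) \<Rightarrow> 'v set set \<Rightarrow> 'v set set" where
  "translate f H = (\<lambda>e. f ` e) ` H"

definition acts_by_isometries ::
  "('g, 'b) monoid_scheme \<Rightarrow> 'v set \<Rightarrow> ('v \<Rightarrow> 'v \<Rightarrow> bool) \<Rightarrow> ('g \<Rightarrow> 'v \<Rightarrow> 'v) \<Rightarrow> bool" where
  "acts_by_isometries G V adj \<phi> \<longleftrightarrow> group_action G V \<phi> \<and>
     (\<forall>g\<in>carrier G. \<forall>a\<in>V. \<forall>b\<in>V. adj (\<phi> g a) (\<phi> g b) \<longleftrightarrow> adj a b)"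

text \<open>Free: no nontrivial element fixes a point of X, i.e. stabilizes a cube.\<close>
definition acts_freely ::
  "('g, 'b) monoid_scheme \<Rightarrow> 'v set \<Rightarrow> ('v \<Rightarrow> 'v \<Rightarrow> bool) \<Rightarrow> ('g \<Rightarrow> 'v \<Rightarrow> 'v) \<Rightarrow> bool" where
  "acts_freely G V adj \<phi> \<longleftrightarrow>
     (\<forall>g\<in>carrier G. g \<noteq> \<one>\<^bsub>G\<^esub> \<longrightarrow> (\<forall>C. is_cube V adj C \<longrightarrow> \<phi> g ` C \<noteq> C))"

text \<open>Cospecial (for a free action): X/G is special in the sense of Haglund-Wise, i.e. its
hyperplanes are two-sided, do not self-intersect, do not directly self-osculate, and no two
of them inter-osculate; all conditions lifted to X.\<close>
definition acts_cospecially ::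
  "('g, 'b) monoid_scheme \<Rightarrow> 'v set \<Rightarrow> ('v \<Rightarrow> 'v \<Rightarrow> bool) \<Rightarrow> ('g \<Rightarrow> 'v \<Rightarrow> 'v) \<Rightarrow> bool" where
  "acts_cospecially G V adj \<phi> \<longleftrightarrow>
     \<comment> \<open>no self-intersection\<close>
     (\<forall>H\<in>hyperplanes V adj. \<forall>g\<in>carrier G. \<not> crosses V adj H (translate (\<phi> g) H)) \<and>
     \<comment> \<open>two-sidedness\<close>
     (\<forall>a\<in>V. \<forall>b\<in>V. adj a b \<longrightarrow>
        (\<forall>g\<in>carrier G. \<phi> g ` halfspace V adj a b \<noteq> halfspace V adj b a)) \<and>
     \<comment> \<open>no direct self-osculation\<close>
     (\<not> (\<exists>v\<in>V. \<exists>w1\<in>V. \<exists>w2\<in>V. \<exists>g\<in>carrier G.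
          adj v w1 \<and> adj v w2 \<and> w1 \<noteq> w2 \<and>
          \<phi> g ` halfspace V adj v w1 = halfspace V adj v w2 \<and>
          \<not> (\<exists>h\<in>carrier G. \<phi> h ` {v, w1} = {v, w2}) \<and>
          \<not> spans_square V adj v w1 w2)) \<and>
     \<comment> \<open>no inter-osculation\<close>
     (\<not> (\<exists>H1\<in>hyperplanes V adj. \<exists>H2\<in>hyperplanes V adj. crosses V adj H1 H2 \<and>
          (\<exists>g\<in>carrier G. \<exists>v\<in>V. \<exists>w1\<in>V. \<exists>w2\<in>V.
             adj v w1 \<and> adj v w2 \<and> w1 \<noteq> w2 \<and> {v, w1} \<in> H1 \<and>
             {v, w2} \<in> translate (\<phi> g) H2 \<and> \<not> spans_square V adj v w1 w2)))"

definition parallel :: "'v set \<Rightarrow> ('v \<Rightarrow> 'v \<Rightarrow> bool) \<Rightarrow> 'v set \<Rightarrow> 'v set \<Rightarrow> bool" where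
  "parallel V adj A B \<longleftrightarrow>
     {hyp V adj a b | a b. a \<in> A \<and> b \<in> A \<and> adj a b} = {hyp V adj a b | a b. a \<in> B \<and> b \<in> B \<and> adj a b}"

definition Stab :: "('g, 'b) monoid_scheme \<Rightarrow> ('g \<Rightarrow> 'v \<Rightarrow> 'v) \<Rightarrow> 'v set \<Rightarrow> 'g set" where
  "Stab G \<phi> A = {g \<in> carrier G. \<phi> g ` A = A}"

end

theory Submission
  imports Defs
begin

locale mg =
  fixes V :: "'v set" and adj :: "'v \<Rightarrow> 'v \<Rightarrow> bool"
  assumes mg: "median_graph V adj"
begin

abbreviation "d \<equiv> gdist V adj"
abbreviation "W \<equiv> halfspace V adj"
abbreviation "I \<equiv> ginterval V adj"

lemma adjV: "adj a b \<Longrightarrow> a \<in> V \<and> b \<in> V" using mg unfolding median_graph_def by blast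
lemma adj_sym: "adj a b \<Longrightarrow> adj b a" using mg unfolding median_graph_def by blast
lemma adj_irr: "\<not> adj a a" using mg unfolding median_graph_def by blast
lemma conn: "u \<in> V \<Longrightarrow> v \<in> V \<Longrightarrow> \<exists>xs. walk V adj xs \<and> hd xs = u \<and> last xs = v"
  using mg unfolding median_graph_def by blast
lemma median_ex: "u \<in> V \<Longrightarrow> v \<in> V \<Longrightarrow> w \<in> V \<Longrightarrow>
   \<exists>!m. m \<in> I u v \<and> m \<in> I v w \<and> m \<in> I u w"
  using mg unfolding median_graph_def by blast

lemma walk_single: "walk V adj [u] \<longleftrightarrow> u \<in> V" by (auto simp: walk_def)

lemma walk_Cons2: "walk V adj (x#y#xs) \<longleftrightarrow> adj x y \<and> walk V adj (y#xs)"
proof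
  assume h: "walk V adj (x#y#xs)"
  then have h1: "\<And>i. Suc i < Suc (Suc (length xs)) \<Longrightarrow> adj ((x#y#xs) ! i) ((x#y#xs) ! Suc i)"
    and h2: "set (x#y#xs) \<subseteq> V" unfolding walk_def by auto
  have "adj x y" using h1[of 0] by simp
  moreover have "walk V adj (y#xs)" unfolding walk_def
  proof (intro conjI allI impI)
    fix i assume "Suc i < length (y # xs)"
    then show "adj ((y # xs) ! i) ((y # xs) ! Suc i)" using h1[of "Suc i"] by simp
  qed (use h2 in auto)
  ultimately show "adj x y \<and> walk V adj (y#xs)" by blast
next
  assume h: "adj x y \<and> walk V adj (y#xs)"
  then have h1: "\<And>i. Suc i < Suc (length xs) \<Longrightarrow> adj ((y#xs) ! i) ((y#xs) ! Suc i)"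
    and h2: "set (y#xs) \<subseteq> V" and h3: "adj x y" unfolding walk_def by auto
  show "walk V adj (x#y#xs)" unfolding walk_def
  proof (intro conjI allI impI)
    fix i assume i: "Suc i < length (x#y#xs)"
    show "adj ((x#y#xs) ! i) ((x#y#xs) ! Suc i)"
    proof (cases i)
      case 0 then show ?thesis using h3 by simp
    next
      case (Suc j) then show ?thesis using h1[of j] i by simp
    qed
  qed (use h2 h3 adjV in auto)
qed

lemma walk_append: "walk V adj xs \<Longrightarrow> walk V adj (y#ys) \<Longrightarrow> last xs = y \<Longrightarrow> walk V adj (xs @ ys)"
proof (induction xs rule: induct_list012)
  case 1 then show ?case by (simp add: walk_def)
next
  case (2 x) then show ?case by (cases ys) (auto simp: walk_Cons2)
next
  case (3 x z zs) then show ?case by (auto simp: walk_Cons2)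
qed

lemma walk_rev: "walk V adj xs \<Longrightarrow> walk V adj (rev xs)"
proof (induction xs rule: induct_list012)
  case 1 then show ?case by (simp add: walk_def)
next
  case (2 x) then show ?case by simp
next
  case (3 x z zs)
  have "walk V adj (rev (z#zs))" using 3 by (simp add: walk_Cons2)
  moreover have "walk V adj [z, x]" using 3 by (auto simp: walk_Cons2 walk_single adj_sym adjV)
  ultimately have "walk V adj (rev (z#zs) @ [x])"
    by (intro walk_append) auto
  then show ?case by simp
qed

lemma d_walk: assumes "u \<in> V" "v \<in> V"
  shows "\<exists>xs. walk V adj xs \<and> hd xs = u \<and> last xs = v \<and> length xs = Suc (d u v)"
proof -
  obtain xs where xs: "walk V adj xs" "hd xs = u" "last xs = v" using conn assms by blast
  then have "length xs = Suc (length xs - 1)" by (cases xs) (auto simp: walk_def)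
  then have "\<exists>n. \<exists>xs. walk V adj xs \<and> hd xs = u \<and> last xs = v \<and> length xs = Suc n" using xs by blast
  from LeastI_ex[OF this] show ?thesis unfolding gdist_def .
qed

lemma d_le: "walk V adj xs \<Longrightarrow> hd xs = u \<Longrightarrow> last xs = v \<Longrightarrow> length xs = Suc n \<Longrightarrow> d u v \<le> n"
  unfolding gdist_def by (rule Least_le) blast

lemma d_refl: "u \<in> V \<Longrightarrow> d u u = 0"
  using d_le[of "[u]" u u 0] by (simp add: walk_single)

lemma d_zero: "u \<in> V \<Longrightarrow> v \<in> V \<Longrightarrow> d u v = 0 \<Longrightarrow> u = v"
  using d_walk[of u v] by (auto simp: length_Suc_conv)

lemma d_sym: assumes "u \<in> V" "v \<in> V" shows "d u v = d v u"
proof -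
  have *: "d b a \<le> d a b" if ab: "a \<in> V" "b \<in> V" for a b
  proof -
    obtain xs where xs: "walk V adj xs" "hd xs = a" "last xs = b" "length xs = Suc (d a b)"
      using d_walk[OF ab] by blast
    have "xs \<noteq> []" using xs by auto
    then show ?thesis using xs by (intro d_le[OF walk_rev]) (auto simp: hd_rev last_rev)
  qed
  show ?thesis using *[of u v] *[of v u] assms by simp
qed

lemma d_tri: assumes "u \<in> V" "v \<in> V" "w \<in> V" shows "d u w \<le> d u v + d v w"
proof -
  obtain xs where xs: "walk V adj xs" "hd xs = u" "last xs = v" "length xs = Suc (d u v)"
    using d_walk assms by blast
  obtain ys where ys: "walk V adj ys" "hd ys = v" "last ys = w" "length ys = Suc (d v w)"
    using d_walk assms by blast
  obtain y ys' where ys': "ys = y # ys'" using ys by (cases ys) auto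
  have "walk V adj (xs @ ys')" using xs ys ys' by (intro walk_append) auto
  moreover have "xs \<noteq> []" using xs by auto
  moreover have "last (xs @ ys') = w" using ys ys' xs by (cases "ys' = []") auto
  ultimately show ?thesis using xs ys ys' by (intro d_le) auto
qed

lemma d_adj: "adj u v \<Longrightarrow> d u v = 1"
proof -
  assume a: "adj u v"
  have "walk V adj [u, v]" using a adjV by (simp add: walk_Cons2 walk_single)
  then have "d u v \<le> 1" by (intro d_le) auto
  moreover have "d u v \<noteq> 0" using d_zero a adjV adj_irr by metis
  ultimately show ?thesis by simp
qed

lemma d_one: assumes "u \<in> V" "v \<in> V" "d u v = 1" shows "adj u v"
proof -
  obtain xs where xs: "walk V adj xs" "hd xs = u" "last xs = v" "length xs = 2"
    using d_walk assms by fastforce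
  then obtain a b where "xs = [a, b]" by (auto simp: length_Suc_conv numeral_2_eq_2)
  then show ?thesis using xs by (simp add: walk_Cons2)
qed

lemma d_step: assumes "u \<in> V" "v \<in> V" "d u v = Suc k" shows "\<exists>w. adj u w \<and> d w v = k"
proof -
  obtain xs where xs: "walk V adj xs" "hd xs = u" "last xs = v" "length xs = Suc (Suc k)"
    using d_walk assms by fastforce
  then obtain w ys where ys: "xs = u # w # ys" by (auto simp: length_Suc_conv)
  have aw: "adj u w" and wy: "walk V adj (w#ys)" using xs ys by (auto simp: walk_Cons2)
  have "d w v \<le> k" using wy xs ys by (intro d_le[OF wy]) auto
  moreover have "d u v \<le> d u w + d w v" using d_tri aw adjV assms by blast
  ultimately show ?thesis using aw d_adj[OF aw] assms by auto
qed

lemma d_adj_diff: assumes "adj a b" "x \<in> V" shows "d x a \<le> d x b + 1" "d x b \<le> d x a + 1"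
proof -
  have ab: "a \<in> V" "b \<in> V" using adjV assms by auto
  have "d x a \<le> d x b + d b a" using d_tri[of x b a] ab assms by simp
  moreover have "d b a = 1" using d_adj adj_sym assms by blast
  ultimately show "d x a \<le> d x b + 1" by simp
  have "d x b \<le> d x a + d a b" using d_tri[of x a b] ab assms by simp
  moreover have "d a b = 1" using d_adj assms by blast
  ultimately show "d x b \<le> d x a + 1" by simp
qed


lemma I_mem: "m \<in> I u v \<longleftrightarrow> m \<in> V \<and> d u m + d m v = d u v"
  by (simp add: ginterval_def)

lemma W_mem: "x \<in> W a b \<longleftrightarrow> x \<in> V \<and> d x a < d x b"
  by (simp add: halfspace_def)

lemma median: assumes "u \<in> V" "v \<in> V" "w \<in> V"
  obtains m where "m \<in> I u v" "m \<in> I v w" "m \<in> I u w"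
  using median_ex[OF assms] by blast

lemma median_uniq: assumes "u \<in> V" "v \<in> V" "w \<in> V"
  "m \<in> I u v" "m \<in> I v w" "m \<in> I u w" "m' \<in> I u v" "m' \<in> I v w" "m' \<in> I u w"
  shows "m = m'"
  using median_ex[OF assms(1-3)] assms(4-) by blast

lemma bip: assumes "adj a b" "x \<in> V" shows "d x a \<noteq> d x b"
proof
  assume eq: "d x a = d x b"
  have ab: "a \<in> V" "b \<in> V" using adjV assms by auto
  obtain m where m: "m \<in> I x a" "m \<in> I a b" "m \<in> I x b" using median[OF assms(2) ab] by metis
  have mV: "m \<in> V" using m by (simp add: I_mem)
  have dab: "d a b = 1" "d b a = 1" using d_adj assms adj_sym by auto
  have "d a m + d m b = 1" using m dab by (simp add: I_mem)
  then have "d a m = 0 \<or> d m b = 0" by arith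
  then have "m = a \<or> m = b" using d_zero mV ab by metis
  then show False
  proof
    assume "m = a" then have "d x a + d a b = d x b" using m by (simp add: I_mem)
    then show False using eq dab by simp
  next
    assume "m = b" then have "d x b + d b a = d x a" using m by (simp add: I_mem)
    then show False using eq dab by simp
  qed
qed

lemma W_compl: assumes "adj a b" "x \<in> V" shows "x \<in> W a b \<longleftrightarrow> x \<notin> W b a"
  using bip[OF assms] by (auto simp: W_mem assms(2))

lemma W_diff: assumes "adj a b" "x \<in> W a b" shows "d x b = d x a + 1"
proof -
  have "x \<in> V" "d x a < d x b" using assms by (auto simp: W_mem)
  then show ?thesis using d_adj_diff(2)[OF assms(1), of x] by simp
qed

lemma W_self: "adj a b \<Longrightarrow> a \<in> W a b"
  using d_refl adjV d_adj by (auto simp: W_mem)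

lemma dist2: assumes "adj x a" "adj x b" "a \<noteq> b" shows "d a b = 2" "x \<in> I a b"
proof -
  have V: "x \<in> V" "a \<in> V" "b \<in> V" using adjV assms by auto
  have "d a b \<le> d a x + d x b" using d_tri V by blast
  moreover have "d a x = 1" "d x b = 1" using d_adj assms adj_sym by auto
  moreover have "d a b \<noteq> 0" using d_zero V assms by blast
  moreover have "d a b \<noteq> 1"
  proof
    assume "d a b = 1" then have "adj a b" using d_one V by blast
    then have "d x a \<noteq> d x b" using bip V by blast
    then show False using d_adj assms by simp
  qed
  ultimately show "d a b = 2" by simp
  then show "x \<in> I a b" using V \<open>d a x = 1\<close> \<open>d x b = 1\<close> by (simp add: I_mem)
qed

lemma quad: assumes "adj x u" "adj x v" "u \<noteq> v" "w \<in> V" "d u w = k" "d v w = k" "d x w = Suc k"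
  shows "\<exists>y. adj y u \<and> adj y v \<and> Suc (d y w) = k"
proof -
  have V: "x \<in> V" "u \<in> V" "v \<in> V" using adjV assms by auto
  obtain m where m: "m \<in> I u v" "m \<in> I v w" "m \<in> I u w" using median[OF V(2,3) assms(4)] by metis
  have mV: "m \<in> V" using m by (simp add: I_mem)
  have duv: "d u v = 2" using dist2 assms by blast
  have e1: "d u m + d m v = 2" using m duv by (simp add: I_mem)
  have e2: "d v m + d m w = k" using m assms by (simp add: I_mem)
  have e3: "d u m + d m w = k" using m assms by (simp add: I_mem)
  have "d m v = d v m" using d_sym mV V by simp
  then have "d u m = 1" "d v m = 1" using e1 e2 e3 by auto
  then have "adj m u" "adj m v" using d_one mV V d_sym by metis+
  moreover have "Suc (d m w) = k"
  proof -
    have "d m w \<noteq> k" using e3 \<open>d u m = 1\<close> by simp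
    then show ?thesis using e3 \<open>d u m = 1\<close> by simp
  qed
  ultimately show ?thesis by blast
qed

lemma SQ: assumes "adj c dd" "adj dd d1" "adj d1 c1" "adj c1 c" "c \<noteq> d1" "dd \<noteq> c1"
  shows "W c1 d1 \<subseteq> W c dd"
proof
  fix y assume y: "y \<in> W c1 d1"
  have yV: "y \<in> V" using y by (simp add: W_mem)
  define r where "r = d y c1"
  have r1: "d y d1 = r + 1" using W_diff[OF adj_sym[OF assms(3)] y] r_def by simp
  show "y \<in> W c dd"
  proof (rule ccontr)
    assume "y \<notin> W c dd"
    then have "y \<in> W dd c" using W_compl[OF assms(1) yV] by simp
    then have h: "d y c = d y dd + 1" using W_diff adj_sym assms(1) by blast
    have "d y c \<le> d y c1 + 1" "d y c1 \<le> d y c + 1" using d_adj_diff[OF assms(4) yV] by auto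
    moreover have "d y dd \<le> d y d1 + 1" "d y d1 \<le> d y dd + 1" using d_adj_diff[OF assms(2) yV] by auto
    moreover have "d y dd \<noteq> d y d1" using bip assms(2) yV by blast
    ultimately have hd: "d y dd = r" "d y c = r + 1" using h r1 r_def by auto
    have "dd \<noteq> c1" by fact
    have cV: "c \<in> V" "d1 \<in> V" "c1 \<in> V" "dd \<in> V" using adjV assms by auto
    have q1: "d c1 y = r" "d dd y = r" "d c y = Suc r" using hd r_def d_sym cV yV by auto
    obtain u where u: "adj u c1" "adj u dd" "Suc (d u y) = r"
      using quad[OF adj_sym[OF assms(4)] assms(1) _ yV q1] assms(6) by metis
    have uV: "u \<in> V" using adjV u by blast
    have duy: "d y u + 1 = r" using u d_sym uV yV by simp
    have cu: "c \<noteq> u" using hd duy by auto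
    have d1u: "d1 \<noteq> u" using r1 duy by auto
    have "c1 = dd"
    proof (rule median_uniq[of c d1 u])
      show "c1 \<in> I c d1" using dist2(2)[OF assms(4) adj_sym[OF assms(3)] assms(5)] .
      show "c1 \<in> I d1 u" using dist2(2)[OF adj_sym[OF assms(3)] adj_sym[OF u(1)] d1u] .
      show "c1 \<in> I c u" using dist2(2)[OF assms(4) adj_sym[OF u(1)] cu] .
      show "dd \<in> I c d1" using dist2(2)[OF adj_sym[OF assms(1)] assms(2) assms(5)] .
      show "dd \<in> I d1 u" using dist2(2)[OF assms(2) adj_sym[OF u(2)] d1u] .
      show "dd \<in> I c u" using dist2(2)[OF adj_sym[OF assms(1)] adj_sym[OF u(2)] cu] .
    qed (use cV uV in auto)
    then show False using assms(6) by simp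
  qed
qed

lemma KF_aux: "\<And>a b c e. adj a b \<Longrightarrow> adj c e \<Longrightarrow> c \<in> W a b \<Longrightarrow> e \<in> W b a \<Longrightarrow> d c a = N
   \<Longrightarrow> W a b \<subseteq> W c e"
proof (induction N rule: less_induct)
  case (less N a b c e)
  have V: "a \<in> V" "b \<in> V" "c \<in> V" "e \<in> V" using adjV less by auto
  show ?case
  proof (cases N)
    case 0
    then have "c = a" using d_zero V less by metis
    then have "d e b < 1" using less d_adj adj_sym d_sym V by (auto simp: W_mem)
    then have "e = b" using d_zero V by (metis less_one d_sym)
    then show ?thesis using \<open>c = a\<close> by simp
  next
    case (Suc M)
    obtain c1 where c1: "adj c c1" "d c1 a = M" using d_step[of c a M] V less Suc by auto
    have c1V: "c1 \<in> V" using adjV c1 by auto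
    have dcb: "d c b = Suc (Suc M)" using W_diff[OF less(2,4)] less Suc by simp
    have "d c1 b \<le> d c1 a + 1" using d_adj_diff[OF less(2) c1V] by simp
    moreover have "d c b \<le> d c1 b + 1" using d_adj_diff[OF c1(1)] V d_sym c1V by (metis add.commute)
    ultimately have dc1b: "d c1 b = Suc M" using dcb c1 by simp
    have c1W: "c1 \<in> W a b" using dc1b c1 c1V by (simp add: W_mem)
    have dea: "d e a = d e b + 1" using W_diff[OF adj_sym[OF less(2)] less(5)] .
    have "d e a \<le> d c a + 1" "d c a \<le> d e a + 1" using d_adj_diff[OF less(3)] V d_sym by (metis add.commute)+
    moreover have "d e a \<noteq> d c a" using bip[OF less(3) V(1)] V d_sym by metis
    moreover have "d e b \<le> d c b + 1" "d c b \<le> d e b + 1" using d_adj_diff[OF less(3)] V d_sym by (metis add.commute)+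
    ultimately have deb: "d e b = Suc M" using dea dcb less Suc by auto
    have ec1: "e \<noteq> c1" using c1W less(5) W_compl[OF adj_sym[OF less(2)]] V by blast
    obtain d1 where d1: "adj d1 e" "adj d1 c1" "Suc (d d1 b) = Suc M"
      using quad[OF less(3) c1(1) ec1 V(2), of "Suc M"] deb dc1b dcb by auto
    have d1V: "d1 \<in> V" using adjV d1 by auto
    have "d d1 a \<noteq> M" using bip[OF d1(2) V(1)] c1 d_sym d1V c1V V by metis
    moreover have "d d1 a \<le> d c1 a + 1" "d c1 a \<le> d d1 a + 1" using d_adj_diff[OF d1(2)] V d_sym d1V c1V by (metis add.commute)+
    ultimately have "d d1 a = Suc M \<or> Suc (d d1 a) = M" using c1 by auto
    then have d1W: "d1 \<in> W b a"
    proof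
      assume "d d1 a = Suc M" then show ?thesis using d1 d1V by (simp add: W_mem)
    next
      assume h: "Suc (d d1 a) = M"
      have "d1 \<in> W a b" using h d1 d1V by (simp add: W_mem)
      moreover have "d d1 a < N" using h Suc by simp
      ultimately have "W a b \<subseteq> W d1 e" using less.IH[of "d d1 a" a b d1 e] less d1 by blast
      then have "c \<in> W d1 e" using less by blast
      then have "d c d1 < 1" using d_adj[OF less(3)] by (simp add: W_mem)
      then have "c = d1" using d_zero V d1V by simp
      then show ?thesis using dcb d1 by simp
    qed
    have "W a b \<subseteq> W c1 d1" using less.IH[of M a b c1 d1] Suc c1 c1W d1W d1 adj_sym less by blast
    also have "W c1 d1 \<subseteq> W c e"
    proof (rule SQ)
      show "adj c e" "adj e d1" "adj d1 c1" "adj c1 c" using less d1 c1 adj_sym by auto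
      show "c \<noteq> d1" using dcb d1 by auto
      show "e \<noteq> c1" by fact
    qed
    finally show ?thesis .
  qed
qed

lemma KF: assumes "adj a b" "adj c e" "c \<in> W a b" "e \<in> W b a" shows "W c e = W a b"
proof -
  have 1: "W a b \<subseteq> W c e" using KF_aux assms by blast
  have 2: "W b a \<subseteq> W e c" using KF_aux[of b a e c] assms adj_sym by blast
  show ?thesis
  proof
    show "W c e \<subseteq> W a b"
    proof
      fix x assume x: "x \<in> W c e"
      then have xV: "x \<in> V" by (simp add: W_mem)
      have "x \<notin> W e c" using W_compl[OF assms(2) xV] x by simp
      then have "x \<notin> W b a" using 2 by blast
      then show "x \<in> W a b" using W_compl[OF assms(1) xV] by simp
    qed
  qed (fact 1)
qed

lemma W_flip: assumes "adj a b" "adj c e" "W c e = W b a" shows "W e c = W a b"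
proof -
  have "\<And>x. x \<in> W e c \<longleftrightarrow> x \<in> W a b"
  proof -
    fix x show "x \<in> W e c \<longleftrightarrow> x \<in> W a b"
    proof (cases "x \<in> V")
      case True
      then show ?thesis using W_compl[OF assms(1) True] W_compl[OF adj_sym[OF assms(2)] True] assms(3) by simp
    next
      case False then show ?thesis by (simp add: W_mem)
    qed
  qed
  then show ?thesis by blast
qed

lemma W_convex_aux: "\<And>z. adj a b \<Longrightarrow> x \<in> W a b \<Longrightarrow> y \<in> W a b \<Longrightarrow> z \<in> I x y \<Longrightarrow> d x z = k \<Longrightarrow> z \<in> W a b"
proof (induction k)
  case 0
  then have "z = x" using d_zero by (auto simp: I_mem W_mem)
  then show ?case using 0 by simp
next
  case (Suc k z)
  have V: "x \<in> V" "y \<in> V" "z \<in> V" using Suc.prems by (auto simp: I_mem W_mem)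
  have dzx: "d z x = Suc k" using d_sym V Suc.prems by simp
  obtain z' where z': "adj z z'" "d z' x = k" using d_step[OF V(3) V(1) dzx] by blast
  have z'V: "z' \<in> V" using adjV z' by auto
  have dxz': "d x z' = k" using z' d_sym z'V V by simp
  have dzz: "d z' z = 1" using d_adj adj_sym z' by blast
  have ixy: "d x z + d z y = d x y" using Suc.prems by (simp add: I_mem)
  have "d x z' + d z' y \<le> d x y"
  proof -
    have "d z' y \<le> d z' z + d z y" using d_tri z'V V by blast
    then show ?thesis using dxz' dzz Suc.prems ixy by simp
  qed
  moreover have "d x y \<le> d x z' + d z' y" using d_tri z'V V by blast
  ultimately have ixy': "d x z' + d z' y = d x y" by simp
  then have "z' \<in> I x y" using z'V by (simp add: I_mem)
  then have z'W: "z' \<in> W a b" using Suc.IH[of z'] Suc.prems dxz' by blast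
  show ?case
  proof (rule ccontr)
    assume "z \<notin> W a b"
    then have "z \<in> W b a" using W_compl[OF Suc.prems(1) V(3)] by blast
    then have "W z' z = W a b" using KF[OF Suc.prems(1) adj_sym[OF z'(1)] z'W] by simp
    moreover have "y \<in> W a b" using Suc.prems by simp
    ultimately have "y \<in> W z' z" by simp
    then have "d y z' < d y z" by (simp add: W_mem)
    moreover have "d y z' = d z' y" "d y z = d z y" using d_sym V z'V by auto
    ultimately show False using dxz' Suc.prems ixy ixy' by simp
  qed
qed

lemma W_convex: "adj a b \<Longrightarrow> x \<in> W a b \<Longrightarrow> y \<in> W a b \<Longrightarrow> z \<in> I x y \<Longrightarrow> z \<in> W a b"
  using W_convex_aux by blast

lemma hyp_sep: assumes "adj a b" "adj c e" "c \<in> W a b" "e \<in> W b a" shows "{c, e} \<in> hyp V adj a b"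
proof -
  have V: "a \<in> V" "b \<in> V" "c \<in> V" "e \<in> V" using adjV assms by auto
  have "d a c + d b e \<noteq> d a e + d b c"
    using assms V d_sym by (auto simp: W_mem)
  then show ?thesis unfolding hyp_def using V assms by blast
qed

lemma hyp_sep_rev: assumes "adj a b" "adj c e" "{c, e} \<in> hyp V adj a b"
  shows "(c \<in> W a b \<and> e \<in> W b a) \<or> (c \<in> W b a \<and> e \<in> W a b)"
proof -
  obtain c' e' where ce: "{c, e} = {c', e'}" "c' \<in> V" "e' \<in> V" "adj c' e'"
    "d a c' + d b e' \<noteq> d a e' + d b c'" using assms(3) unfolding hyp_def by blast
  have V: "a \<in> V" "b \<in> V" "c \<in> V" "e \<in> V" using adjV assms by auto
  have "(c' \<in> W a b \<and> e' \<in> W b a) \<or> (c' \<in> W b a \<and> e' \<in> W a b)"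
  proof -
    have "\<not> (c' \<in> W a b \<and> e' \<in> W a b)"
    proof
      assume h: "c' \<in> W a b \<and> e' \<in> W a b"
      then have "d c' b = d c' a + 1" "d e' b = d e' a + 1" using W_diff assms by auto
      then show False using ce V d_sym by (metis add.assoc add.commute)
    qed
    moreover have "\<not> (c' \<in> W b a \<and> e' \<in> W b a)"
    proof
      assume h: "c' \<in> W b a \<and> e' \<in> W b a"
      then have "d c' a = d c' b + 1" "d e' a = d e' b + 1" using W_diff assms adj_sym by auto
      then show False using ce V d_sym by (metis add.assoc add.commute)
    qed
    ultimately show ?thesis using W_compl[OF assms(1)] ce by blast
  qed
  moreover have "(c = c' \<and> e = e') \<or> (c = e' \<and> e = c')" using ce(1) by (auto simp: doubleton_eq_iff)
  ultimately show ?thesis by blast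
qed

lemma hyp_self: "adj c e \<Longrightarrow> {c, e} \<in> hyp V adj c e"
  using hyp_sep W_self adj_sym by blast

lemma hyp_eq_W: assumes "adj a b" "adj c e" "hyp V adj a b = hyp V adj c e"
  shows "W c e = W a b \<or> W e c = W a b"
proof -
  have "{c, e} \<in> hyp V adj a b" using assms hyp_self by simp
  then have "(c \<in> W a b \<and> e \<in> W b a) \<or> (c \<in> W b a \<and> e \<in> W a b)" using hyp_sep_rev assms by blast
  then show ?thesis
  proof
    assume "c \<in> W a b \<and> e \<in> W b a" then show ?thesis using KF assms by blast
  next
    assume "c \<in> W b a \<and> e \<in> W a b"
    then have "W c e = W b a" using KF[of b a c e] assms adj_sym by blast
    then show ?thesis using W_flip assms by blast
  qed
qed


definition cvx :: "'v set \<Rightarrow> bool" where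
  "cvx A \<longleftrightarrow> A \<subseteq> V \<and> (\<forall>u\<in>A. \<forall>v\<in>A. I u v \<subseteq> A)"

definition par :: "'v set \<Rightarrow> 'v set \<Rightarrow> bool" where
  "par A B \<longleftrightarrow> (\<forall>a\<in>A. \<forall>b\<in>A. adj a b \<longrightarrow> (\<exists>c\<in>B. \<exists>e\<in>B. adj c e \<and> W c e = W a b)) \<and>
               (\<forall>a\<in>B. \<forall>b\<in>B. adj a b \<longrightarrow> (\<exists>c\<in>A. \<exists>e\<in>A. adj c e \<and> W c e = W a b))"

lemma par_sym: "par A B \<Longrightarrow> par B A" unfolding par_def by blast

lemma convex_cvx: "convex_subcomplex V adj A \<Longrightarrow> cvx A"
  unfolding convex_subcomplex_def cvx_def by blast

lemma parallel_par: assumes "parallel V adj A B" shows "par A B"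
proof -
  have *: "\<exists>c\<in>Y. \<exists>e\<in>Y. adj c e \<and> W c e = W a b"
    if eq: "{hyp V adj a b | a b. a \<in> X \<and> b \<in> X \<and> adj a b} = {hyp V adj a b | a b. a \<in> Y \<and> b \<in> Y \<and> adj a b}"
      and ab: "a \<in> X" "b \<in> X" "adj a b" for X Y a b
  proof -
    have "hyp V adj a b \<in> {hyp V adj a b | a b. a \<in> Y \<and> b \<in> Y \<and> adj a b}" using eq ab by blast
    then obtain c e where ce: "c \<in> Y" "e \<in> Y" "adj c e" "hyp V adj a b = hyp V adj c e" by blast
    then have "W c e = W a b \<or> W e c = W a b" using hyp_eq_W ab by blast
    then show ?thesis using ce adj_sym by blast
  qed
  show ?thesis using assms unfolding parallel_def par_def by (metis (no_types, lifting) *)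
qed

lemma cvx_I: "cvx A \<Longrightarrow> u \<in> A \<Longrightarrow> v \<in> A \<Longrightarrow> x \<in> I u v \<Longrightarrow> x \<in> A"
  unfolding cvx_def by blast

lemma gate: assumes "cvx A" "p \<in> A" "x \<in> V" "\<forall>a\<in>A. d x p \<le> d x a" "a \<in> A"
  shows "d x a = d x p + d p a"
proof -
  have V: "p \<in> V" "a \<in> V" using assms unfolding cvx_def by auto
  obtain m where m: "m \<in> I x p" "m \<in> I p a" "m \<in> I x a" using median[OF assms(3) V] by metis
  have mA: "m \<in> A" using cvx_I[OF assms(1) assms(2) assms(5) m(2)] .
  have mV: "m \<in> V" using m by (simp add: I_mem)
  have "d x p \<le> d x m" using assms(4) mA by blast
  moreover have "d x m + d m p = d x p" using m by (simp add: I_mem)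
  ultimately have "d m p = 0" by simp
  then have "m = p" using d_zero mV V by blast
  then show ?thesis using m by (simp add: I_mem)
qed

lemma inter_sub: assumes "cvx A" "cvx B" "par A B" "p \<in> A" "p \<in> B"
  shows "A \<subseteq> B"
proof -
  have "\<And>x. x \<in> A \<Longrightarrow> d p x = k \<Longrightarrow> x \<in> B" for k
  proof (induction k)
    case 0 then show ?case using d_zero assms unfolding cvx_def by blast
  next
    case (Suc k x)
    have V: "p \<in> V" "x \<in> V" using assms Suc.prems unfolding cvx_def by auto
    have dxp: "d x p = Suc k" using d_sym V Suc.prems by simp
    obtain x' where x': "adj x x'" "d x' p = k" using d_step[OF V(2) V(1) dxp] by blast
    have x'V: "x' \<in> V" using adjV x' by auto
    have "d p x' + d x' x = d p x" using x' d_sym x'V V Suc.prems d_adj adj_sym by simp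
    then have "x' \<in> I p x" using x'V by (simp add: I_mem)
    then have x'A: "x' \<in> A" using cvx_I assms Suc.prems by blast
    then have x'B: "x' \<in> B" using Suc.IH x' d_sym x'V V by simp
    obtain c e where ce: "c \<in> B" "e \<in> B" "adj c e" "W c e = W x' x"
      using assms(3) x'A Suc.prems x' adj_sym unfolding par_def by meson
    have "W e c = W x x'" using W_flip[OF x'(1) ce(3)] ce(4) by simp
    then have "e \<in> W x x'" using W_self adj_sym ce(3) by metis
    then have "d e x' = d e x + 1" using W_diff x' by blast
    then have "d x' x + d x e = d x' e" using d_adj adj_sym x' d_sym x'V V adjV ce by (metis add.commute)
    then have "x \<in> I x' e" using V by (simp add: I_mem)
    then show ?case using cvx_I[OF assms(2) x'B ce(2)] by blast
  qed
  then show ?thesis by blast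
qed


lemma W_eq_from: assumes "adj a b" "adj c e" "W a b \<subseteq> W c e" "W b a \<subseteq> W e c"
  shows "W c e = W a b"
proof
  show "W c e \<subseteq> W a b"
  proof
    fix x assume x: "x \<in> W c e"
    then have xV: "x \<in> V" by (simp add: W_mem)
    have "x \<notin> W e c" using W_compl[OF assms(2) xV] x by simp
    then have "x \<notin> W b a" using assms(4) by blast
    then show "x \<in> W a b" using W_compl[OF assms(1) xV] by simp
  qed
qed (fact assms(3))

lemma sqW: assumes "adj a b" "adj b b'" "adj b' a'" "adj a' a" "a \<noteq> b'" "b \<noteq> a'"
  shows "W a' b' = W a b"
proof (rule W_eq_from)
  show "adj a' b'" using assms adj_sym by blast
  show "W a b \<subseteq> W a' b'"
  proof -
    have "W b' a' \<subseteq> W b a" using SQ[of b a a' b'] assms adj_sym by blast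
    have "W a' b' \<subseteq> W a b" using SQ[of a b b' a'] assms by blast
    show ?thesis
    proof
      fix x assume x: "x \<in> W a b"
      then have xV: "x \<in> V" by (simp add: W_mem)
      have "x \<notin> W b a" using W_compl[OF assms(1) xV] x by simp
      then have "x \<notin> W b' a'" using \<open>W b' a' \<subseteq> W b a\<close> by blast
      then show "x \<in> W a' b'" using W_compl[OF \<open>adj a' b'\<close> xV] by simp
    qed
  qed
  show "W b a \<subseteq> W b' a'"
  proof
    have "W a' b' \<subseteq> W a b" using SQ[of a b b' a'] assms by blast
    fix x assume x: "x \<in> W b a"
    then have xV: "x \<in> V" by (simp add: W_mem)
    have "x \<notin> W a b" using W_compl[OF assms(1) xV] x by simp
    then have "x \<notin> W a' b'" using \<open>W a' b' \<subseteq> W a b\<close> by blast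
    then show "x \<in> W b' a'" using W_compl[OF \<open>adj a' b'\<close> xV] by simp
  qed
qed (fact assms(1))

lemma sep_geom:
  assumes A1: "cvx A1" and A2: "cvx A2" and pa: "par A1 A2" and p: "p \<in> A1" and q: "q \<in> A2"
    and mn: "\<forall>a\<in>A1. \<forall>b\<in>A2. d p q \<le> d a b" and pp1: "adj p p1" and dp1: "Suc (d p1 q) = d p q"
  shows "A1 \<subseteq> W p p1" "A2 \<subseteq> W p1 p" "\<forall>u\<in>A1. \<exists>u'\<in>W p1 p. adj u u'"
proof -
  have V: "p \<in> V" "q \<in> V" "p1 \<in> V" using A1 A2 p q adjV pp1 unfolding cvx_def by auto
  have A1V: "A1 \<subseteq> V" and A2V: "A2 \<subseteq> V" using A1 A2 unfolding cvx_def by auto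
  have qHm: "q \<in> W p1 p" using dp1 V d_sym by (simp add: W_mem)
  have pHp: "p \<in> W p p1" using W_self pp1 by blast
  have pnHm: "p \<notin> W p1 p" using W_compl[OF pp1 V(1)] pHp by simp
  show a: "A1 \<subseteq> W p p1"
  proof
    fix x assume x: "x \<in> A1"
    have xV: "x \<in> V" using x A1V by blast
    have "\<forall>a\<in>A1. d q p \<le> d q a" using mn q d_sym V A1V by (metis subsetD)
    then have "d q x = d q p + d p x" using gate[OF A1 p V(2) _ x] by blast
    then have "p \<in> I q x" using V by (simp add: I_mem)
    have "x \<notin> W p1 p"
    proof
      assume "x \<in> W p1 p"
      then have "p \<in> W p1 p" using W_convex[OF adj_sym[OF pp1] qHm _ \<open>p \<in> I q x\<close>] by blast
      then show False using pnHm by simp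
    qed
    then show "x \<in> W p p1" using W_compl[OF pp1 xV] by simp
  qed
  show "A2 \<subseteq> W p1 p"
  proof
    fix y assume y: "y \<in> A2"
    have yV: "y \<in> V" using y A2V by blast
    have "\<forall>b\<in>A2. d p q \<le> d p b" using mn p by blast
    then have "d p y = d p q + d q y" using gate[OF A2 q V(1) _ y] by blast
    then have "q \<in> I p y" using V by (simp add: I_mem)
    have "y \<notin> W p p1"
    proof
      assume "y \<in> W p p1"
      then have "q \<in> W p p1" using W_convex[OF pp1 pHp _ \<open>q \<in> I p y\<close>] by blast
      then show False using W_compl[OF pp1 V(2)] qHm by simp
    qed
    then show "y \<in> W p1 p" using W_compl[OF pp1 yV] by simp
  qed
  note b = this
  have "\<And>x. x \<in> A1 \<Longrightarrow> d p x = k \<Longrightarrow> \<exists>u'\<in>W p1 p. adj x u'" for k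
  proof (induction k)
    case 0 then have "x = p" using d_zero V A1V by blast
    then show ?case using pp1 W_self adj_sym by blast
  next
    case (Suc k x)
    have xV: "x \<in> V" using Suc.prems A1V by blast
    have dxp: "d x p = Suc k" using d_sym V xV Suc.prems by simp
    obtain x' where x': "adj x x'" "d x' p = k" using d_step[OF xV V(1) dxp] by blast
    have x'V: "x' \<in> V" using adjV x' by auto
    have "d p x' + d x' x = d p x" using x' d_sym x'V V Suc.prems d_adj adj_sym by simp
    then have "x' \<in> I p x" using x'V by (simp add: I_mem)
    then have x'A: "x' \<in> A1" using cvx_I A1 p Suc.prems by blast
    have "d p x' = k" using x' d_sym x'V V by simp
    then obtain x'' where x'': "x'' \<in> W p1 p" "adj x' x''" using Suc.IH x'A by blast
    have x''V: "x'' \<in> V" using adjV x'' by auto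
    obtain c e where ce: "c \<in> A2" "e \<in> A2" "adj c e" "W c e = W x' x"
      using pa x'A Suc.prems x' adj_sym unfolding par_def by meson
    have "W e c = W x x'" using W_flip[OF x'(1) ce(3)] ce(4) by simp
    then have eW: "e \<in> W x x'" using W_self adj_sym ce(3) by metis
    have eV: "e \<in> V" using ce A2V by blast
    have x'Hp: "x' \<in> W p p1" using a x'A by blast
    have xHp: "x \<in> W p p1" using a Suc.prems by blast
    have Wx'': "W x'' x' = W p1 p" using KF[OF adj_sym[OF pp1] adj_sym[OF x''(2)] x''(1) x'Hp] .
    have eHm: "e \<in> W p1 p" using b ce by blast
    have r1: "d e x' = Suc (d e x)" using W_diff[OF x'(1) eW] by simp
    have r2: "d e x' = Suc (d e x'')" using W_diff[OF adj_sym[OF x''(2)]] eHm Wx'' by simp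
    have xx'': "x \<noteq> x''" using xHp x''(1) W_compl[OF pp1 xV] by blast
    obtain y where y: "adj y x" "adj y x''" "Suc (d y e) = d e x"
      using quad[OF adj_sym[OF x'(1)] x''(2) xx'' eV, of "d e x"] r1 r2 d_sym eV xV x'V x''V by auto
    have "d y e \<noteq> d x' e" using y r1 d_sym eV x'V by simp
    then have yx': "y \<noteq> x'" by blast
    have "W y x = W x'' x'"
      using sqW[of x'' x' x y] x'' x' y adj_sym xx'' yx' by blast
    then have "y \<in> W p1 p" using Wx'' W_self y(1) by metis
    then show ?case using y adj_sym by blast
  qed
  then show "\<forall>u\<in>A1. \<exists>u'\<in>W p1 p. adj u u'" by blast
qed


lemma nbW: assumes "adj p p1" "u \<in> W p p1" "u' \<in> W p1 p" "adj u u'"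
  shows "W u u' = W p p1" "W u' u = W p1 p"
  using KF[OF assms(1) assms(4) assms(2) assms(3)] KF[OF adj_sym[OF assms(1)] adj_sym[OF assms(4)] assms(3) assms(2)]
  by auto

lemma dist_eq: assumes "adj p p1" "x \<in> W p p1" "y \<in> W p p1" "x' \<in> W p1 p" "y' \<in> W p1 p"
  "adj x x'" "adj y y'"
  shows "d x' y' = d x y"
proof -
  have V: "x \<in> V" "y \<in> V" "x' \<in> V" "y' \<in> V" using assms by (auto simp: W_mem)
  have "y \<in> W x x'" using nbW[OF assms(1) assms(2) assms(4) assms(6)] assms(3) by simp
  then have 1: "d y x' = d y x + 1" using W_diff[OF assms(6)] by simp
  have "x' \<in> W y' y" using nbW[OF assms(1) assms(3) assms(5) assms(7)] assms(4) by simp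
  then have 2: "d x' y = d x' y' + 1" using W_diff[OF adj_sym[OF assms(7)]] by simp
  show ?thesis using 1 2 d_sym V by simp
qed

lemma copy:
  assumes A1: "cvx A1" and pp1: "adj p p1" and sub: "A1 \<subseteq> W p p1"
    and C: "\<forall>u\<in>A1. \<exists>u'\<in>W p1 p. adj u u'"
  shows "cvx {v \<in> W p1 p. \<exists>u\<in>A1. adj u v}"
    and "par A1 B \<Longrightarrow> par {v \<in> W p1 p. \<exists>u\<in>A1. adj u v} B"
proof -
  define A' where "A' = {v \<in> W p1 p. \<exists>u\<in>A1. adj u v}"
  have A1V: "A1 \<subseteq> V" using A1 unfolding cvx_def by auto
  have A'V: "A' \<subseteq> V" unfolding A'_def by (auto simp: W_mem)
  have "cvx A'" unfolding cvx_def
  proof (intro conjI ballI subsetI)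
    fix x' y' z assume x': "x' \<in> A'" and y': "y' \<in> A'" and z: "z \<in> I x' y'"
    obtain x where x: "x \<in> A1" "adj x x'" using x' unfolding A'_def by blast
    obtain y where y: "y \<in> A1" "adj y y'" using y' unfolding A'_def by blast
    have x'H: "x' \<in> W p1 p" "y' \<in> W p1 p" using x' y' unfolding A'_def by auto
    have V: "x \<in> V" "y \<in> V" "x' \<in> V" "y' \<in> V" "z \<in> V" using x y x' y' A1V A'V z by (auto simp: I_mem)
    have zH: "z \<in> W p1 p" using W_convex[OF adj_sym[OF pp1] x'H z] .
    have dd: "d x' y' = d x y" using dist_eq[OF pp1 _ _ x'H x(2) y(2)] x y sub by blast
    obtain m where m: "m \<in> I z x" "m \<in> I x y" "m \<in> I z y" using median[OF V(5) V(1) V(2)] by metis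
    have mA: "m \<in> A1" using cvx_I[OF A1 x(1) y(1) m(2)] .
    have mV: "m \<in> V" using mA A1V by blast
    have e1: "d z m + d m x = d z x" "d x m + d m y = d x y" "d z m + d m y = d z y"
      using m by (auto simp: I_mem)
    have "d z x \<le> d z x' + d x' x" "d z y \<le> d z y' + d y' y" using d_tri V by blast+
    moreover have "d x' x = 1" "d y' y = 1" using d_adj adj_sym x y by auto
    moreover have "d x' z + d z y' = d x' y'" using z by (simp add: I_mem)
    moreover have "d m x = d x m" "d z x' = d x' z" using d_sym V mV by auto
    ultimately have "d z m \<le> 1" using e1 dd by simp
    moreover have "z \<noteq> m" using zH mA sub W_compl[OF pp1 mV] by blast
    ultimately have "d z m = 1" using d_zero V mV by (metis le_neq_implies_less less_one)
    then have "adj m z" using d_one d_sym V mV by metis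
    then show "z \<in> A'" unfolding A'_def using zH mA by blast
  qed (use A'V in auto)
  then show "cvx {v \<in> W p1 p. \<exists>u\<in>A1. adj u v}" unfolding A'_def .
  assume pa: "par A1 B"
  have "par A' B" unfolding par_def
  proof (intro conjI ballI impI)
    fix a' b' assume a': "a' \<in> A'" and b': "b' \<in> A'" and ab': "adj a' b'"
    obtain a where a: "a \<in> A1" "adj a a'" using a' unfolding A'_def by blast
    obtain b where b: "b \<in> A1" "adj b b'" using b' unfolding A'_def by blast
    have H: "a' \<in> W p1 p" "b' \<in> W p1 p" using a' b' unfolding A'_def by auto
    have "d a' b' = d a b" using dist_eq[OF pp1 _ _ H a(2) b(2)] a b sub by blast
    then have "d a b = d a' b'" by simp
    then have "d a b = 1" using d_adj ab' by simp
    then have ab: "adj a b" using d_one a b A1V by blast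
    have ne: "a \<noteq> b'" "b \<noteq> a'" using a b H sub W_compl[OF pp1] A1V by blast+
    have "W a' b' = W a b" using sqW[of a b b' a'] ab b(2) ab' a(2) adj_sym ne by blast
    then show "\<exists>c\<in>B. \<exists>e\<in>B. adj c e \<and> W c e = W a' b'" using pa a b ab unfolding par_def by metis
  next
    fix c e assume c: "c \<in> B" and e: "e \<in> B" and ce: "adj c e"
    obtain a b where ab: "a \<in> A1" "b \<in> A1" "adj a b" "W a b = W c e" using pa c e ce unfolding par_def by metis
    obtain a' where a': "a' \<in> W p1 p" "adj a a'" using C ab by blast
    obtain b' where b': "b' \<in> W p1 p" "adj b b'" using C ab by blast
    have "d a' b' = d a b" using dist_eq[OF pp1 _ _ a'(1) b'(1) a'(2) b'(2)] ab sub by blast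
    then have "d a' b' = 1" using d_adj ab by simp
    then have ab': "adj a' b'" using d_one a' b' by (meson W_mem)
    have ne: "a \<noteq> b'" "b \<noteq> a'" using ab a' b' sub W_compl[OF pp1] A1V by blast+
    have "W a' b' = W a b" using sqW[of a b b' a'] ab b'(2) ab' a'(2) adj_sym ne by blast
    moreover have "a' \<in> A'" "b' \<in> A'" unfolding A'_def using a' b' ab by auto
    ultimately show "\<exists>c'\<in>A'. \<exists>e'\<in>A'. adj c' e' \<and> W c' e' = W c e" using ab' ab by metis
  qed
  then show "par {v \<in> W p1 p. \<exists>u\<in>A1. adj u v} B" unfolding A'_def .
qed

end

locale mga = mg V adj for V :: "'v set" and adj +
  fixes G :: "('g, 'b) monoid_scheme" and \<phi> :: "'g \<Rightarrow> 'v \<Rightarrow> 'v"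
  assumes act: "acts_by_isometries G V adj \<phi>"
    and free: "acts_freely G V adj \<phi>"
    and cosp: "acts_cospecially G V adj \<phi>"
begin

lemma ga: "group_action G V \<phi>" using act unfolding acts_by_isometries_def by blast

lemma grp: "group G"
  using ga group_action.group_hom group_hom.axioms(1) by blast

lemma phiV: "g \<in> carrier G \<Longrightarrow> x \<in> V \<Longrightarrow> \<phi> g x \<in> V"
  using group_action.element_image[OF ga] by blast

lemma adjphi: "g \<in> carrier G \<Longrightarrow> a \<in> V \<Longrightarrow> b \<in> V \<Longrightarrow> adj (\<phi> g a) (\<phi> g b) \<longleftrightarrow> adj a b"
  using act unfolding acts_by_isometries_def by blast

lemma adjphi': "g \<in> carrier G \<Longrightarrow> adj a b \<Longrightarrow> adj (\<phi> g a) (\<phi> g b)"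
  using adjphi adjV by blast

lemma phi_inv1: "g \<in> carrier G \<Longrightarrow> x \<in> V \<Longrightarrow> \<phi> (inv\<^bsub>G\<^esub> g) (\<phi> g x) = x"
  using group_action.orbit_sym_aux[OF ga] by blast

lemma inv_car: "g \<in> carrier G \<Longrightarrow> inv\<^bsub>G\<^esub> g \<in> carrier G"
  using group.inv_closed[OF grp] by blast

lemma phi_inv2: "g \<in> carrier G \<Longrightarrow> x \<in> V \<Longrightarrow> \<phi> g (\<phi> (inv\<^bsub>G\<^esub> g) x) = x"
  using phi_inv1[OF inv_car, of g x] group.inv_inv[OF grp] by simp

lemma walk_phi: assumes g: "g \<in> carrier G" and w: "walk V adj xs" shows "walk V adj (map (\<phi> g) xs)"
  unfolding walk_def
proof (intro conjI allI impI)
  show "map (\<phi> g) xs \<noteq> []" using w by (simp add: walk_def)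
  show "set (map (\<phi> g) xs) \<subseteq> V" using w phiV[OF g] by (auto simp: walk_def)
  fix i assume i: "Suc i < length (map (\<phi> g) xs)"
  have "adj (xs ! i) (xs ! Suc i)" using w i by (simp add: walk_def)
  then show "adj (map (\<phi> g) xs ! i) (map (\<phi> g) xs ! Suc i)" using adjphi'[OF g] i by simp
qed

lemma d_phi_le: assumes "g \<in> carrier G" "a \<in> V" "b \<in> V" shows "d (\<phi> g a) (\<phi> g b) \<le> d a b"
proof -
  obtain xs where xs: "walk V adj xs" "hd xs = a" "last xs = b" "length xs = Suc (d a b)"
    using d_walk assms by blast
  have "xs \<noteq> []" using xs by auto
  then show ?thesis using xs by (intro d_le[OF walk_phi[OF assms(1) xs(1)]]) (auto simp: hd_map last_map)
qed

lemma d_phi: assumes "g \<in> carrier G" "a \<in> V" "b \<in> V" shows "d (\<phi> g a) (\<phi> g b) = d a b"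
proof -
  have "d (\<phi> (inv\<^bsub>G\<^esub> g) (\<phi> g a)) (\<phi> (inv\<^bsub>G\<^esub> g) (\<phi> g b)) \<le> d (\<phi> g a) (\<phi> g b)"
    using d_phi_le inv_car phiV assms by blast
  then show ?thesis using d_phi_le[OF assms] phi_inv1 assms by simp
qed

lemma W_phi: assumes "g \<in> carrier G" "a \<in> V" "b \<in> V" shows "\<phi> g ` W a b = W (\<phi> g a) (\<phi> g b)"
proof
  show "\<phi> g ` W a b \<subseteq> W (\<phi> g a) (\<phi> g b)"
    using assms d_phi phiV by (auto simp: W_mem)
  show "W (\<phi> g a) (\<phi> g b) \<subseteq> \<phi> g ` W a b"
  proof
    fix x assume x: "x \<in> W (\<phi> g a) (\<phi> g b)"
    have xV: "x \<in> V" using x by (simp add: W_mem)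
    define y where "y = \<phi> (inv\<^bsub>G\<^esub> g) x"
    have yV: "y \<in> V" using y_def phiV inv_car assms xV by blast
    have xy: "x = \<phi> g y" using y_def phi_inv2 assms xV by simp
    have "y \<in> W a b" using x xy yV d_phi assms by (simp add: W_mem)
    then show "x \<in> \<phi> g ` W a b" using xy by blast
  qed
qed

lemma img_inv: assumes g: "g \<in> carrier G" and SV: "S \<subseteq> V" and gS: "\<phi> g ` S = S" shows "\<phi> (inv\<^bsub>G\<^esub> g) ` S = S"
proof -
  have "\<phi> (inv\<^bsub>G\<^esub> g) ` (\<phi> g ` S) = S"
  proof
    show "\<phi> (inv\<^bsub>G\<^esub> g) ` \<phi> g ` S \<subseteq> S"
    proof
      fix y assume "y \<in> \<phi> (inv\<^bsub>G\<^esub> g) ` \<phi> g ` S"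
      then obtain x where x: "x \<in> S" "y = \<phi> (inv\<^bsub>G\<^esub> g) (\<phi> g x)" by blast
      then have "y = x" using phi_inv1[OF g] SV by blast
      then show "y \<in> S" using x by simp
    qed
    show "S \<subseteq> \<phi> (inv\<^bsub>G\<^esub> g) ` \<phi> g ` S"
    proof
      fix x assume x: "x \<in> S"
      then have "x = \<phi> (inv\<^bsub>G\<^esub> g) (\<phi> g x)" using phi_inv1[OF g] SV by (metis subsetD)
      then show "x \<in> \<phi> (inv\<^bsub>G\<^esub> g) ` \<phi> g ` S" using x by blast
    qed
  qed
  then show ?thesis using gS by simp
qed

lemma cube_single: "p \<in> V \<Longrightarrow> is_cube V adj {p}"
  unfolding is_cube_def
proof (intro conjI exI)
  assume "p \<in> V"
  then show "{p} \<subseteq> V" by simp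
  show "bij_betw (\<lambda>S. p) (Pow {..<0::nat}) {p}" by (auto simp: bij_betw_def inj_on_def)
  show "\<forall>S\<in>Pow {..<0::nat}. \<forall>T\<in>Pow {..<0}. adj p p \<longleftrightarrow> card (S - T \<union> (T - S)) = 1"
    using adj_irr by auto
qed

lemma one_id: "x \<in> V \<Longrightarrow> \<phi> \<one>\<^bsub>G\<^esub> x = x"
  using group_action.id_eq_one[OF ga] by (metis restrict_apply')

lemma core:
  assumes g: "g \<in> carrier G" and A1V: "A1 \<subseteq> V" and gA: "\<phi> g ` A1 = A1"
    and pp1: "adj p p1" and p: "p \<in> A1" and sub: "A1 \<subseteq> W p p1"
    and C: "\<forall>u\<in>A1. \<exists>u'\<in>W p1 p. adj u u'"
  shows "\<phi> g ` W p1 p = W p1 p"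
proof -
  have V: "p \<in> V" "p1 \<in> V" using adjV pp1 by auto
  define p0 where "p0 = \<phi> (inv\<^bsub>G\<^esub> g) p"
  have p0A: "p0 \<in> A1" using img_inv[OF g A1V gA] p p0_def by blast
  have p0V: "p0 \<in> V" using p0A A1V by blast
  have gp0: "\<phi> g p0 = p" using p0_def phi_inv2 g V by simp
  obtain v where v: "v \<in> W p1 p" "adj p0 v" using C p0A by blast
  have vV: "v \<in> V" using v by (simp add: W_mem)
  define p2 where "p2 = \<phi> g v"
  have pp2: "adj p p2" using adjphi' g v(2) gp0 p2_def by blast
  have Kp: "\<phi> g ` W p p1 = W (\<phi> g p) (\<phi> g p1)" using W_phi g V by blast
  have Km: "\<phi> g ` W p1 p = W (\<phi> g p1) (\<phi> g p)" using W_phi g V by blast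
  have gpp1: "adj (\<phi> g p) (\<phi> g p1)" using adjphi' g pp1 by blast
  have pK: "p \<in> W (\<phi> g p) (\<phi> g p1)" using p gA sub Kp by blast
  have p2K: "p2 \<in> W (\<phi> g p1) (\<phi> g p)" using v Km p2_def by blast
  have W1: "W p p2 = W (\<phi> g p) (\<phi> g p1)" using KF[OF gpp1 pp2 pK p2K] .
  have W2: "W p2 p = W (\<phi> g p1) (\<phi> g p)" using KF[OF adj_sym[OF gpp1] adj_sym[OF pp2] p2K pK] .
  show ?thesis
  proof (cases "p1 = p2")
    case True then show ?thesis using Km W2 by simp
  next
    case False
    have p2V: "p2 \<in> V" using adjV pp2 by blast
    have osc: "\<phi> g ` W p p1 = W p p2" using Kp W1 by simp
    have nos: "\<not> (\<exists>v\<in>V. \<exists>w1\<in>V. \<exists>w2\<in>V. \<exists>g\<in>carrier G.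
          adj v w1 \<and> adj v w2 \<and> w1 \<noteq> w2 \<and>
          \<phi> g ` halfspace V adj v w1 = halfspace V adj v w2 \<and>
          \<not> (\<exists>h\<in>carrier G. \<phi> h ` {v, w1} = {v, w2}) \<and>
          \<not> spans_square V adj v w1 w2)"
      using conjunct1[OF conjunct2[OF conjunct2[OF cosp[unfolded acts_cospecially_def]]]] .
    have "(\<exists>h\<in>carrier G. \<phi> h ` {p, p1} = {p, p2}) \<or> spans_square V adj p p1 p2"
    proof (rule ccontr)
      assume na: "\<not> ((\<exists>h\<in>carrier G. \<phi> h ` {p, p1} = {p, p2}) \<or> spans_square V adj p p1 p2)"
      have "\<exists>v\<in>V. \<exists>w1\<in>V. \<exists>w2\<in>V. \<exists>g\<in>carrier G.
          adj v w1 \<and> adj v w2 \<and> w1 \<noteq> w2 \<and>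
          \<phi> g ` halfspace V adj v w1 = halfspace V adj v w2 \<and>
          \<not> (\<exists>h\<in>carrier G. \<phi> h ` {v, w1} = {v, w2}) \<and>
          \<not> spans_square V adj v w1 w2"
        apply (rule bexI[where x=p], rule bexI[where x=p1], rule bexI[where x=p2], rule bexI[where x=g])
        using na pp1 pp2 False osc g V p2V by auto
      then show False using nos by blast
    qed
    then show ?thesis
    proof
      assume "spans_square V adj p p1 p2"
      then obtain u where u: "u \<in> V" "u \<noteq> p" "adj p1 u" "adj p2 u" unfolding spans_square_def by blast
      have H: "hyp V adj p p1 \<in> hyperplanes V adj" unfolding hyperplanes_def using V pp1 by blast
      have noX: "\<not> crosses V adj (hyp V adj p p1) (translate (\<phi> g) (hyp V adj p p1))"
        using conjunct1[OF cosp[unfolded acts_cospecially_def]] H g by blast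
      have e1: "{p1, p} \<in> hyp V adj p p1" using hyp_self[OF pp1] by (simp add: insert_commute)
      have hs: "{p0, v} \<in> hyp V adj p p1" using hyp_sep[OF pp1 v(2) _ v(1)] p0A sub by blast
      have im: "\<phi> g ` {p0, v} = {p, p2}" using gp0 p2_def by simp
      have e2: "{p, p2} \<in> translate (\<phi> g) (hyp V adj p p1)"
        unfolding translate_def using image_eqI[of "{p, p2}" "\<lambda>e. \<phi> g ` e" "{p0, v}", OF im[symmetric] hs] .
      have c: "adj p1 p \<and> adj p p2 \<and> adj p2 u \<and> adj u p1 \<and> p1 \<noteq> p2 \<and> p \<noteq> u \<and>
          {p1, p} \<in> hyp V adj p p1 \<and> {p, p2} \<in> translate (\<phi> g) (hyp V adj p p1)"
        using adj_sym[OF pp1] pp2 u(4) adj_sym[OF u(3)] False u(2) e1 e2 by simp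
      have "crosses V adj (hyp V adj p p1) (translate (\<phi> g) (hyp V adj p p1))"
        unfolding crosses_def
        apply (rule bexI[where x=p1], rule bexI[where x=p], rule bexI[where x=p2], rule bexI[where x=u])
            apply (rule c)
        using V p2V u(1) by auto
      then show ?thesis using noX by simp
    next
      assume "\<exists>h\<in>carrier G. \<phi> h ` {p, p1} = {p, p2}"
      then obtain h where h: "h \<in> carrier G" "{\<phi> h p, \<phi> h p1} = {p, p2}" by auto
      have hinj: "\<phi> h p \<noteq> \<phi> h p1"
      proof
        assume "\<phi> h p = \<phi> h p1"
        then have "p = p1" using inj_onD[OF group_action.inj_prop[OF ga h(1)]] V by blast
        then show False using pp1 adj_irr by simp
      qed
      show ?thesis
      proof (cases "\<phi> h p = p")
        case True
        have "h = \<one>\<^bsub>G\<^esub>"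
        proof (rule ccontr)
          assume "h \<noteq> \<one>\<^bsub>G\<^esub>"
          then have "\<phi> h ` {p} \<noteq> {p}" using free h(1) cube_single V unfolding acts_freely_def by blast
          then show False using True by simp
        qed
        then have "\<phi> h p1 = p1" using one_id V by simp
        then have "p1 = p2" using h(2) True hinj by (auto simp: doubleton_eq_iff)
        then show ?thesis using False by simp
      next
        case hp: False
        have hp2: "\<phi> h p = p2" and hp1: "\<phi> h p1 = p" using h(2) hp hinj by (auto simp: doubleton_eq_iff)
        define k where "k = inv\<^bsub>G\<^esub> h \<otimes>\<^bsub>G\<^esub> g"
        have k: "k \<in> carrier G" unfolding k_def using inv_car[OF h(1)] g monoid.m_closed[OF group.is_monoid[OF grp]] by blast
        have "\<phi> k ` W p p1 = \<phi> (inv\<^bsub>G\<^esub> h) ` (\<phi> g ` W p p1)"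
        proof -
          have "\<phi> k x = \<phi> (inv\<^bsub>G\<^esub> h) (\<phi> g x)" if "x \<in> W p p1" for x
            using group_action.composition_rule[OF ga _ inv_car[OF h(1)] g] that k_def by (simp add: W_mem)
          then show ?thesis by (simp add: image_image cong: image_cong)
        qed
        also have "\<dots> = W (\<phi> (inv\<^bsub>G\<^esub> h) p) (\<phi> (inv\<^bsub>G\<^esub> h) p2)"
          using osc W_phi[OF inv_car[OF h(1)] V(1) p2V] by simp
        also have "\<dots> = W p1 p" using phi_inv1[OF h(1)] V hp1 hp2 by metis
        finally have "\<phi> k ` W p p1 = W p1 p" .
        moreover have "\<phi> k ` W p p1 \<noteq> W p1 p"
          using conjunct1[OF conjunct2[OF cosp[unfolded acts_cospecially_def]]] k V pp1 by blast
        ultimately show ?thesis by simp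
      qed
    qed
  qed
qed


lemma main_ind:
  assumes A2: "cvx A2" and g: "g \<in> carrier G"
  shows "cvx A1 \<Longrightarrow> par A1 A2 \<Longrightarrow> \<phi> g ` A1 = A1 \<Longrightarrow> p \<in> A1 \<Longrightarrow> q \<in> A2 \<Longrightarrow> d p q \<le> n
     \<Longrightarrow> \<phi> g ` A2 = A2"
proof (induction n arbitrary: A1 p q rule: less_induct)
  case (less n A1 p q)
  have A1V: "A1 \<subseteq> V" and A2V: "A2 \<subseteq> V" using less.prems A2 unfolding cvx_def by auto
  define m where "m = (LEAST k. \<exists>a\<in>A1. \<exists>b\<in>A2. d a b = k)"
  have ex: "\<exists>a\<in>A1. \<exists>b\<in>A2. d a b = d p q" using less.prems by blast
  obtain p' q' where pq': "p' \<in> A1" "q' \<in> A2" "d p' q' = m"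
    using LeastI_ex[of "\<lambda>k. \<exists>a\<in>A1. \<exists>b\<in>A2. d a b = k"] ex unfolding m_def by blast
  have mn: "\<forall>a\<in>A1. \<forall>b\<in>A2. d p' q' \<le> d a b"
    using pq'(3) unfolding m_def by (metis (mono_tags, lifting) Least_le)
  have "m \<le> d p q" using mn less.prems pq' by metis
  then have mn': "m \<le> n" using less.prems by simp
  have V: "p' \<in> V" "q' \<in> V" using pq' A1V A2V by auto
  show ?case
  proof (cases m)
    case 0
    then have "p' = q'" using d_zero V pq' by simp
    then have "A1 \<subseteq> A2" "A2 \<subseteq> A1"
      using inter_sub[OF less.prems(1) A2 less.prems(2)] inter_sub[OF A2 less.prems(1) par_sym[OF less.prems(2)]] pq'
      by auto
    then show ?thesis using less.prems by auto
  next
    case (Suc m')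
    obtain p1 where p1: "adj p' p1" "d p1 q' = m'" using d_step[of p' q' m'] V pq' Suc by auto
    have dp1: "Suc (d p1 q') = d p' q'" using p1 pq' Suc by simp
    note sg = sep_geom[OF less.prems(1) A2 less.prems(2) pq'(1,2) mn p1(1) dp1]
    define A' where "A' = {v \<in> W p1 p'. \<exists>u\<in>A1. adj u v}"
    have cA': "cvx A'" using copy(1)[OF less.prems(1) p1(1) sg(1) sg(3)] unfolding A'_def .
    have pA': "par A' A2" using copy(2)[OF less.prems(1) p1(1) sg(1) sg(3) less.prems(2)] unfolding A'_def .
    have gH: "\<phi> g ` W p1 p' = W p1 p'" using core[OF g A1V less.prems(3) p1(1) pq'(1) sg(1) sg(3)] .
    have Hsub: "W p1 p' \<subseteq> V" by (auto simp: W_mem)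
    have stepsub: "\<phi> h ` A' \<subseteq> A'" if h: "h \<in> carrier G" "\<phi> h ` A1 = A1" "\<phi> h ` W p1 p' = W p1 p'" for h
    proof
      fix y assume "y \<in> \<phi> h ` A'"
      then obtain v u where vu: "y = \<phi> h v" "v \<in> W p1 p'" "u \<in> A1" "adj u v" unfolding A'_def by blast
      have "y \<in> W p1 p'" using vu h by blast
      moreover have "\<phi> h u \<in> A1" using vu h by blast
      moreover have "adj (\<phi> h u) y" using adjphi'[OF h(1) vu(4)] vu by simp
      ultimately show "y \<in> A'" unfolding A'_def by blast
    qed
    have s1: "\<phi> g ` A' \<subseteq> A'" using stepsub g less.prems(3) gH by blast
    have s2: "\<phi> (inv\<^bsub>G\<^esub> g) ` A' \<subseteq> A'"
      using stepsub inv_car[OF g] img_inv[OF g A1V less.prems(3)] img_inv[OF g Hsub gH] by blast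
    have A'V: "A' \<subseteq> V" using cA' unfolding cvx_def by blast
    have "A' \<subseteq> \<phi> g ` A'"
    proof
      fix x assume x: "x \<in> A'"
      then have "x = \<phi> g (\<phi> (inv\<^bsub>G\<^esub> g) x)" using phi_inv2[OF g] A'V by auto
      then show "x \<in> \<phi> g ` A'" using s2 x by blast
    qed
    then have gA': "\<phi> g ` A' = A'" using s1 by blast
    have p1A': "p1 \<in> A'" unfolding A'_def using W_self[OF adj_sym[OF p1(1)]] pq'(1) p1(1) by blast
    have "d p1 q' < n" using p1 Suc mn' by simp
    then show ?thesis using less.IH[OF _ cA' pA' gA' p1A' pq'(2)] by blast
  qed
qed

lemma stab_sub: assumes "cvx A1" "cvx A2" "par A1 A2" "A2 \<noteq> {}" "A1 \<noteq> {}"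
  shows "Stab G \<phi> A1 \<subseteq> Stab G \<phi> A2"
proof
  fix g assume "g \<in> Stab G \<phi> A1"
  then have g: "g \<in> carrier G" "\<phi> g ` A1 = A1" unfolding Stab_def by auto
  obtain p q where "p \<in> A1" "q \<in> A2" using assms by blast
  then have "\<phi> g ` A2 = A2" using main_ind[OF assms(2) g(1) assms(1) assms(3) g(2)] by blast
  then show "g \<in> Stab G \<phi> A2" unfolding Stab_def using g by simp
qed

end

theorem lemma3p10:
  fixes G :: "('g, 'b) monoid_scheme" and \<phi> :: "'g \<Rightarrow> 'v \<Rightarrow> 'v"
    and V :: "'v set" and adj :: "'v \<Rightarrow> 'v \<Rightarrow> bool" and A1 A2 :: "'v set"
  assumes "cat0_cube_complex V adj"
    and "acts_by_isometries G V adj \<phi>"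
    and "acts_freely G V adj \<phi>"
    and "acts_cospecially G V adj \<phi>"
    and "convex_subcomplex V adj A1" and "convex_subcomplex V adj A2"
    and "parallel V adj A1 A2"
    and "\<forall>g\<in>carrier G. \<forall>A\<in>{A1, A2}. \<phi> g ` A = A \<or> \<phi> g ` A \<inter> A = {}"
  shows "Stab G \<phi> A1 = Stab G \<phi> A2"
proof -
  interpret mga V adj G \<phi>
    using assms(1-4) by (unfold_locales) auto
  have c1: "cvx A1" "cvx A2" using convex_cvx assms(5,6) by auto
  have ne: "A1 \<noteq> {}" "A2 \<noteq> {}" using assms(5,6) unfolding convex_subcomplex_def by auto
  have p: "par A1 A2" using parallel_par assms(7) by blast
  show ?thesis
    using stab_sub[OF c1(1) c1(2) p ne(2) ne(1)] stab_sub[OF c1(2) c1(1) par_sym[OF p] ne(1) ne(2)] by blast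
qed

end
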